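(* Let $\theta(q,x):=\sum_{j=0}^{\infty}q^{j(j+1)/2}x^j$ and $w:=3/\sqrt{2}$. For all $(q,t)\in[0.6,0.75]\times[0,1]$, one has $\theta(q,-t+wi)\neq 0$. *)

theory Defs
  imports "HOL-Analysis.Analysis"
begin

definition ptheta :: "real \<Rightarrow> complex \<Rightarrow> complex" where
  "ptheta q x = (\<Sum>j. complex_of_real (q ^ (j * (j + 1) div 2)) * x ^ j)"

end

theory Submission
  imports Defs
begin

fun padd :: "rat list \<Rightarrow> rat list \<Rightarrow> rat list" where
  "padd [] ys = ys"
| "padd xs [] = xs"
| "padd (x#xs) (y#ys) = (x+y) # padd xs ys"

definition psm :: "rat \<Rightarrow> rat list \<Rightarrow> rat list" where
  "psm c p = map (\<lambda>x. c * x) p"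

fun pe :: "rat list \<Rightarrow> real \<Rightarrow> real" where
  "pe [] t = 0"
| "pe (c#cs) t = of_rat c + t * pe cs t"

lemma pe_padd: "pe (padd xs ys) t = pe xs t + pe ys t"
  by (induction xs ys rule: padd.induct) (auto simp: algebra_simps of_rat_add)

lemma pe_psm: "pe (psm c p) t = of_rat c * pe p t"
  by (induction p) (auto simp: psm_def algebra_simps of_rat_mult)

fun AB :: "nat \<Rightarrow> rat list \<times> rat list" where
  "AB 0 = ([1], [])"
| "AB (Suc n) = (case AB n of (a, b) \<Rightarrow>
     (padd (psm (-1) (0 # a)) (psm (-9/2) b), padd a (psm (-1) (0 # b))))"

lemma AB_pow:
  assumes w2: "w * w = 9/2"
  shows "Complex (-t) w ^ n = Complex (pe (fst (AB n)) t) (w * pe (snd (AB n)) t)"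
proof (induction n)
  case 0
  then show ?case by (simp add: one_complex.ctr)
next
  case (Suc n)
  have "Complex (-t) w ^ Suc n = Complex (pe (fst (AB n)) t) (w * pe (snd (AB n)) t) * Complex (-t) w"
    by (simp add: power_Suc2 Suc)
  also have "\<dots> = Complex (pe (fst (AB (Suc n))) t) (w * pe (snd (AB (Suc n))) t)"
    by (cases "AB n") (simp add: pe_padd pe_psm of_rat_minus of_rat_divide algebra_simps w2 complex_eq_iff
         flip: mult.assoc)
  finally show ?case .
qed


fun sv :: "(real \<times> nat) list \<Rightarrow> real \<Rightarrow> real" where
  "sv [] q = 0"
| "sv ((v, T) # r) q = v * q ^ T + sv r q"

fun sb :: "(real \<times> nat) list \<Rightarrow> real \<Rightarrow> real \<Rightarrow> real" where
  "sb [] a b = 0"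
| "sb ((v, T) # r) a b = (if 0 \<le> v then v * a ^ T else v * b ^ T) + sb r a b"

lemma sb_le:
  fixes a b q :: real
  assumes "0 \<le> a" "a \<le> q" "q \<le> b"
  shows "sb l a b \<le> sv l q"
proof (induction l)
  case Nil
  then show ?case by simp
next
  case (Cons p r)
  obtain v T where p: "p = (v, T)" by fastforce
  have q0: "0 \<le> q" using assms by linarith
  have h: "(if 0 \<le> v then v * a ^ T else v * b ^ T) \<le> v * q ^ T"
  proof (cases "0 \<le> v")
    case True
    have "a ^ T \<le> q ^ T" using assms by (intro power_mono) auto
    then show ?thesis using True by (simp add: mult_left_mono)
  next
    case False
    have "q ^ T \<le> b ^ T" using assms q0 by (intro power_mono) auto
    then show ?thesis using False by (simp add: mult_left_mono_neg)
  qed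
  then show ?case using Cons by (simp add: p)
qed

lemma cell_ok:
  fixes a b q :: real
  assumes "0 \<le> a" "a \<le> q" "q \<le> b" "e < sb l a b"
  shows "e < sv l q"
  using sb_le[OF assms(1-3), of l] assms(4) by linarith

lemma AB0: "snd (AB 0) = []"
  by code_simp

lemma AB1: "snd (AB 1) = [1]"
  by code_simp

lemma AB1s: "snd (AB (Suc 0)) = [1]"
  using AB1 by simp

lemma AB2: "snd (AB 2) = [0, -2]"
  by code_simp

lemma AB3: "snd (AB 3) = [-9/2, 0, 3]"
  by code_simp

lemma AB4: "snd (AB 4) = [0, 18, 0, -4]"
  by code_simp

lemma AB5: "snd (AB 5) = [81/4, 0, -45, 0, 5]"
  by code_simp

lemma AB6: "snd (AB 6) = [0, -243/2, 0, 90, 0, -6]"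
  by code_simp

lemma AB7: "snd (AB 7) = [-729/8, 0, 1701/4, 0, -315/2, 0, 7]"
  by code_simp

definition b0 :: "(real \<times> nat) list" where
  "b0 = [(1, 1), (-9/2, 6), (81/4, 15), (-729/8, 28)]"

definition b1 :: "(real \<times> nat) list" where
  "b1 = [(1, 1), (-1/3, 3), (-9/2, 6), (3, 10), (81/4, 15), (-81/4, 21), (-729/8, 28)]"

definition b2 :: "(real \<times> nat) list" where
  "b2 = [(1, 1), (-2/3, 3), (-43/10, 6), (6, 10), (69/4, 15), (-81/2, 21), (-2511/40, 28)]"

definition b3 :: "(real \<times> nat) list" where
  "b3 = [(1, 1), (-1, 3), (-39/10, 6), (44/5, 10), (45/4, 15), (-225/4, 21), (-243/40, 28)]"

definition b4 :: "(real \<times> nat) list" where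
  "b4 = [(1, 1), (-4/3, 3), (-33/10, 6), (56/5, 10), (31/12, 15), (-63, 21), (2739/40, 28)]"

definition b5 :: "(real \<times> nat) list" where
  "b5 = [(1, 1), (-5/3, 3), (-5/2, 6), (13, 10), (-97/12, 15), (-229/4, 21), (1119/8, 28)]"

definition b6 :: "(real \<times> nat) list" where
  "b6 = [(1, 1), (-2, 3), (-3/2, 6), (14, 10), (-79/4, 15), (-75/2, 21), (1469/8, 28)]"

lemma b0_c0: "3/5 \<le> q \<Longrightarrow> q \<le> 141/200 \<Longrightarrow> 1/20 < sv b0 q"
  by (rule cell_ok[where a="3/5" and b="141/200"]) (simp_all add: b0_def power_divide)

lemma b0_c1: "141/200 \<le> q \<Longrightarrow> q \<le> 37/50 \<Longrightarrow> 1/20 < sv b0 q"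
  by (rule cell_ok[where a="141/200" and b="37/50"]) (simp_all add: b0_def power_divide)

lemma b0_c2: "37/50 \<le> q \<Longrightarrow> q \<le> 3/4 \<Longrightarrow> 1/20 < sv b0 q"
  by (rule cell_ok[where a="37/50" and b="3/4"]) (simp_all add: b0_def power_divide)

lemma b0_pos:
  assumes "3/5 \<le> q" "q \<le> 3/4"
  shows "1/20 < sv b0 q"
proof (cases "q \<le> 141/200")
  case True then show ?thesis using b0_c0[of q] assms by linarith
next
  case False note f0 = False
  show ?thesis
    proof (cases "q \<le> 37/50")
      case True then show ?thesis using b0_c1[of q] assms f0 by linarith
    next
      case False note f1 = False
      show ?thesis
        using b0_c2[of q] assms f1 by linarith
    qed
qed

lemma b1_c0: "3/5 \<le> q \<Longrightarrow> q \<le> 273/400 \<Longrightarrow> 1/20 < sv b1 q"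
  by (rule cell_ok[where a="3/5" and b="273/400"]) (simp_all add: b1_def power_divide)

lemma b1_c1: "273/400 \<le> q \<Longrightarrow> q \<le> 143/200 \<Longrightarrow> 1/20 < sv b1 q"
  by (rule cell_ok[where a="273/400" and b="143/200"]) (simp_all add: b1_def power_divide)

lemma b1_c2: "143/200 \<le> q \<Longrightarrow> q \<le> 147/200 \<Longrightarrow> 1/20 < sv b1 q"
  by (rule cell_ok[where a="143/200" and b="147/200"]) (simp_all add: b1_def power_divide)

lemma b1_c3: "147/200 \<le> q \<Longrightarrow> q \<le> 3/4 \<Longrightarrow> 1/20 < sv b1 q"
  by (rule cell_ok[where a="147/200" and b="3/4"]) (simp_all add: b1_def power_divide)

lemma b1_pos:
  assumes "3/5 \<le> q" "q \<le> 3/4"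
  shows "1/20 < sv b1 q"
proof (cases "q \<le> 273/400")
  case True then show ?thesis using b1_c0[of q] assms by linarith
next
  case False note f0 = False
  show ?thesis
    proof (cases "q \<le> 143/200")
      case True then show ?thesis using b1_c1[of q] assms f0 by linarith
    next
      case False note f1 = False
      show ?thesis
        proof (cases "q \<le> 147/200")
          case True then show ?thesis using b1_c2[of q] assms f1 by linarith
        next
          case False note f2 = False
          show ?thesis
            using b1_c3[of q] assms f2 by linarith
        qed
    qed
qed

lemma b2_c0: "3/5 \<le> q \<Longrightarrow> q \<le> 267/400 \<Longrightarrow> 1/20 < sv b2 q"
  by (rule cell_ok[where a="3/5" and b="267/400"]) (simp_all add: b2_def power_divide)

lemma b2_c1: "267/400 \<le> q \<Longrightarrow> q \<le> 7/10 \<Longrightarrow> 1/20 < sv b2 q"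
  by (rule cell_ok[where a="267/400" and b="7/10"]) (simp_all add: b2_def power_divide)

lemma b2_c2: "7/10 \<le> q \<Longrightarrow> q \<le> 18/25 \<Longrightarrow> 1/20 < sv b2 q"
  by (rule cell_ok[where a="7/10" and b="18/25"]) (simp_all add: b2_def power_divide)

lemma b2_c3: "18/25 \<le> q \<Longrightarrow> q \<le> 147/200 \<Longrightarrow> 1/20 < sv b2 q"
  by (rule cell_ok[where a="18/25" and b="147/200"]) (simp_all add: b2_def power_divide)

lemma b2_c4: "147/200 \<le> q \<Longrightarrow> q \<le> 149/200 \<Longrightarrow> 1/20 < sv b2 q"
  by (rule cell_ok[where a="147/200" and b="149/200"]) (simp_all add: b2_def power_divide)

lemma b2_c5: "149/200 \<le> q \<Longrightarrow> q \<le> 3/4 \<Longrightarrow> 1/20 < sv b2 q"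
  by (rule cell_ok[where a="149/200" and b="3/4"]) (simp_all add: b2_def power_divide)

lemma b2_pos:
  assumes "3/5 \<le> q" "q \<le> 3/4"
  shows "1/20 < sv b2 q"
proof (cases "q \<le> 267/400")
  case True then show ?thesis using b2_c0[of q] assms by linarith
next
  case False note f0 = False
  show ?thesis
    proof (cases "q \<le> 7/10")
      case True then show ?thesis using b2_c1[of q] assms f0 by linarith
    next
      case False note f1 = False
      show ?thesis
        proof (cases "q \<le> 18/25")
          case True then show ?thesis using b2_c2[of q] assms f1 by linarith
        next
          case False note f2 = False
          show ?thesis
            proof (cases "q \<le> 147/200")
              case True then show ?thesis using b2_c3[of q] assms f2 by linarith
            next
              case False note f3 = False
              show ?thesis
                proof (cases "q \<le> 149/200")
                  case True then show ?thesis using b2_c4[of q] assms f3 by linarith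
                next
                  case False note f4 = False
                  show ?thesis
                    using b2_c5[of q] assms f4 by linarith
                qed
            qed
        qed
    qed
qed

lemma b3_c0: "3/5 \<le> q \<Longrightarrow> q \<le> 263/400 \<Longrightarrow> 1/20 < sv b3 q"
  by (rule cell_ok[where a="3/5" and b="263/400"]) (simp_all add: b3_def power_divide)

lemma b3_c1: "263/400 \<le> q \<Longrightarrow> q \<le> 11/16 \<Longrightarrow> 1/20 < sv b3 q"
  by (rule cell_ok[where a="263/400" and b="11/16"]) (simp_all add: b3_def power_divide)

lemma b3_c2: "11/16 \<le> q \<Longrightarrow> q \<le> 283/400 \<Longrightarrow> 1/20 < sv b3 q"
  by (rule cell_ok[where a="11/16" and b="283/400"]) (simp_all add: b3_def power_divide)

lemma b3_c3: "283/400 \<le> q \<Longrightarrow> q \<le> 289/400 \<Longrightarrow> 1/20 < sv b3 q"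
  by (rule cell_ok[where a="283/400" and b="289/400"]) (simp_all add: b3_def power_divide)

lemma b3_c4: "289/400 \<le> q \<Longrightarrow> q \<le> 293/400 \<Longrightarrow> 1/20 < sv b3 q"
  by (rule cell_ok[where a="289/400" and b="293/400"]) (simp_all add: b3_def power_divide)

lemma b3_c5: "293/400 \<le> q \<Longrightarrow> q \<le> 297/400 \<Longrightarrow> 1/20 < sv b3 q"
  by (rule cell_ok[where a="293/400" and b="297/400"]) (simp_all add: b3_def power_divide)

lemma b3_c6: "297/400 \<le> q \<Longrightarrow> q \<le> 3/4 \<Longrightarrow> 1/20 < sv b3 q"
  by (rule cell_ok[where a="297/400" and b="3/4"]) (simp_all add: b3_def power_divide)

lemma b3_pos:
  assumes "3/5 \<le> q" "q \<le> 3/4"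
  shows "1/20 < sv b3 q"
proof (cases "q \<le> 263/400")
  case True then show ?thesis using b3_c0[of q] assms by linarith
next
  case False note f0 = False
  show ?thesis
    proof (cases "q \<le> 11/16")
      case True then show ?thesis using b3_c1[of q] assms f0 by linarith
    next
      case False note f1 = False
      show ?thesis
        proof (cases "q \<le> 283/400")
          case True then show ?thesis using b3_c2[of q] assms f1 by linarith
        next
          case False note f2 = False
          show ?thesis
            proof (cases "q \<le> 289/400")
              case True then show ?thesis using b3_c3[of q] assms f2 by linarith
            next
              case False note f3 = False
              show ?thesis
                proof (cases "q \<le> 293/400")
                  case True then show ?thesis using b3_c4[of q] assms f3 by linarith
                next
                  case False note f4 = False
                  show ?thesis
                    proof (cases "q \<le> 297/400")
                      case True then show ?thesis using b3_c5[of q] assms f4 by linarith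
                    next
                      case False note f5 = False
                      show ?thesis
                        using b3_c6[of q] assms f5 by linarith
                    qed
                qed
            qed
        qed
    qed
qed

lemma b4_c0: "3/5 \<le> q \<Longrightarrow> q \<le> 259/400 \<Longrightarrow> 1/20 < sv b4 q"
  by (rule cell_ok[where a="3/5" and b="259/400"]) (simp_all add: b4_def power_divide)

lemma b4_c1: "259/400 \<le> q \<Longrightarrow> q \<le> 27/40 \<Longrightarrow> 1/20 < sv b4 q"
  by (rule cell_ok[where a="259/400" and b="27/40"]) (simp_all add: b4_def power_divide)

lemma b4_c2: "27/40 \<le> q \<Longrightarrow> q \<le> 139/200 \<Longrightarrow> 1/20 < sv b4 q"
  by (rule cell_ok[where a="27/40" and b="139/200"]) (simp_all add: b4_def power_divide)

lemma b4_c3: "139/200 \<le> q \<Longrightarrow> q \<le> 71/100 \<Longrightarrow> 1/20 < sv b4 q"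
  by (rule cell_ok[where a="139/200" and b="71/100"]) (simp_all add: b4_def power_divide)

lemma b4_c4: "71/100 \<le> q \<Longrightarrow> q \<le> 289/400 \<Longrightarrow> 1/20 < sv b4 q"
  by (rule cell_ok[where a="71/100" and b="289/400"]) (simp_all add: b4_def power_divide)

lemma b4_c5: "289/400 \<le> q \<Longrightarrow> q \<le> 293/400 \<Longrightarrow> 1/20 < sv b4 q"
  by (rule cell_ok[where a="289/400" and b="293/400"]) (simp_all add: b4_def power_divide)

lemma b4_c6: "293/400 \<le> q \<Longrightarrow> q \<le> 37/50 \<Longrightarrow> 1/20 < sv b4 q"
  by (rule cell_ok[where a="293/400" and b="37/50"]) (simp_all add: b4_def power_divide)

lemma b4_c7: "37/50 \<le> q \<Longrightarrow> q \<le> 299/400 \<Longrightarrow> 1/20 < sv b4 q"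
  by (rule cell_ok[where a="37/50" and b="299/400"]) (simp_all add: b4_def power_divide)

lemma b4_c8: "299/400 \<le> q \<Longrightarrow> q \<le> 3/4 \<Longrightarrow> 1/20 < sv b4 q"
  by (rule cell_ok[where a="299/400" and b="3/4"]) (simp_all add: b4_def power_divide)

lemma b4_pos:
  assumes "3/5 \<le> q" "q \<le> 3/4"
  shows "1/20 < sv b4 q"
proof (cases "q \<le> 259/400")
  case True then show ?thesis using b4_c0[of q] assms by linarith
next
  case False note f0 = False
  show ?thesis
    proof (cases "q \<le> 27/40")
      case True then show ?thesis using b4_c1[of q] assms f0 by linarith
    next
      case False note f1 = False
      show ?thesis
        proof (cases "q \<le> 139/200")
          case True then show ?thesis using b4_c2[of q] assms f1 by linarith
        next
          case False note f2 = False
          show ?thesis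
            proof (cases "q \<le> 71/100")
              case True then show ?thesis using b4_c3[of q] assms f2 by linarith
            next
              case False note f3 = False
              show ?thesis
                proof (cases "q \<le> 289/400")
                  case True then show ?thesis using b4_c4[of q] assms f3 by linarith
                next
                  case False note f4 = False
                  show ?thesis
                    proof (cases "q \<le> 293/400")
                      case True then show ?thesis using b4_c5[of q] assms f4 by linarith
                    next
                      case False note f5 = False
                      show ?thesis
                        proof (cases "q \<le> 37/50")
                          case True then show ?thesis using b4_c6[of q] assms f5 by linarith
                        next
                          case False note f6 = False
                          show ?thesis
                            proof (cases "q \<le> 299/400")
                              case True then show ?thesis using b4_c7[of q] assms f6 by linarith
                            next
                              case False note f7 = False
                              show ?thesis
                                using b4_c8[of q] assms f7 by linarith
                            qed
                        qed
                    qed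
                qed
            qed
        qed
    qed
qed

lemma b5_c0: "3/5 \<le> q \<Longrightarrow> q \<le> 16/25 \<Longrightarrow> 1/20 < sv b5 q"
  by (rule cell_ok[where a="3/5" and b="16/25"]) (simp_all add: b5_def power_divide)

lemma b5_c1: "16/25 \<le> q \<Longrightarrow> q \<le> 133/200 \<Longrightarrow> 1/20 < sv b5 q"
  by (rule cell_ok[where a="16/25" and b="133/200"]) (simp_all add: b5_def power_divide)

lemma b5_c2: "133/200 \<le> q \<Longrightarrow> q \<le> 273/400 \<Longrightarrow> 1/20 < sv b5 q"
  by (rule cell_ok[where a="133/200" and b="273/400"]) (simp_all add: b5_def power_divide)

lemma b5_c3: "273/400 \<le> q \<Longrightarrow> q \<le> 279/400 \<Longrightarrow> 1/20 < sv b5 q"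
  by (rule cell_ok[where a="273/400" and b="279/400"]) (simp_all add: b5_def power_divide)

lemma b5_c4: "279/400 \<le> q \<Longrightarrow> q \<le> 71/100 \<Longrightarrow> 1/20 < sv b5 q"
  by (rule cell_ok[where a="279/400" and b="71/100"]) (simp_all add: b5_def power_divide)

lemma b5_c5: "71/100 \<le> q \<Longrightarrow> q \<le> 18/25 \<Longrightarrow> 1/20 < sv b5 q"
  by (rule cell_ok[where a="71/100" and b="18/25"]) (simp_all add: b5_def power_divide)

lemma b5_c6: "18/25 \<le> q \<Longrightarrow> q \<le> 291/400 \<Longrightarrow> 1/20 < sv b5 q"
  by (rule cell_ok[where a="18/25" and b="291/400"]) (simp_all add: b5_def power_divide)

lemma b5_c7: "291/400 \<le> q \<Longrightarrow> q \<le> 147/200 \<Longrightarrow> 1/20 < sv b5 q"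
  by (rule cell_ok[where a="291/400" and b="147/200"]) (simp_all add: b5_def power_divide)

lemma b5_c8: "147/200 \<le> q \<Longrightarrow> q \<le> 297/400 \<Longrightarrow> 1/20 < sv b5 q"
  by (rule cell_ok[where a="147/200" and b="297/400"]) (simp_all add: b5_def power_divide)

lemma b5_c9: "297/400 \<le> q \<Longrightarrow> q \<le> 299/400 \<Longrightarrow> 1/20 < sv b5 q"
  by (rule cell_ok[where a="297/400" and b="299/400"]) (simp_all add: b5_def power_divide)

lemma b5_c10: "299/400 \<le> q \<Longrightarrow> q \<le> 3/4 \<Longrightarrow> 1/20 < sv b5 q"
  by (rule cell_ok[where a="299/400" and b="3/4"]) (simp_all add: b5_def power_divide)

lemma b5_pos:
  assumes "3/5 \<le> q" "q \<le> 3/4"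
  shows "1/20 < sv b5 q"
proof (cases "q \<le> 16/25")
  case True then show ?thesis using b5_c0[of q] assms by linarith
next
  case False note f0 = False
  show ?thesis
    proof (cases "q \<le> 133/200")
      case True then show ?thesis using b5_c1[of q] assms f0 by linarith
    next
      case False note f1 = False
      show ?thesis
        proof (cases "q \<le> 273/400")
          case True then show ?thesis using b5_c2[of q] assms f1 by linarith
        next
          case False note f2 = False
          show ?thesis
            proof (cases "q \<le> 279/400")
              case True then show ?thesis using b5_c3[of q] assms f2 by linarith
            next
              case False note f3 = False
              show ?thesis
                proof (cases "q \<le> 71/100")
                  case True then show ?thesis using b5_c4[of q] assms f3 by linarith
                next
                  case False note f4 = False
                  show ?thesis
                    proof (cases "q \<le> 18/25")
                      case True then show ?thesis using b5_c5[of q] assms f4 by linarith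
                    next
                      case False note f5 = False
                      show ?thesis
                        proof (cases "q \<le> 291/400")
                          case True then show ?thesis using b5_c6[of q] assms f5 by linarith
                        next
                          case False note f6 = False
                          show ?thesis
                            proof (cases "q \<le> 147/200")
                              case True then show ?thesis using b5_c7[of q] assms f6 by linarith
                            next
                              case False note f7 = False
                              show ?thesis
                                proof (cases "q \<le> 297/400")
                                  case True then show ?thesis using b5_c8[of q] assms f7 by linarith
                                next
                                  case False note f8 = False
                                  show ?thesis
                                    proof (cases "q \<le> 299/400")
                                      case True then show ?thesis using b5_c9[of q] assms f8 by linarith
                                    next
                                      case False note f9 = False
                                      show ?thesis
                                        using b5_c10[of q] assms f9 by linarith
                                    qed
                                qed
                            qed
                        qed
                    qed
                qed
            qed
        qed
    qed
qed

lemma b6_c0: "3/5 \<le> q \<Longrightarrow> q \<le> 253/400 \<Longrightarrow> 1/20 < sv b6 q"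
  by (rule cell_ok[where a="3/5" and b="253/400"]) (simp_all add: b6_def power_divide)

lemma b6_c1: "253/400 \<le> q \<Longrightarrow> q \<le> 131/200 \<Longrightarrow> 1/20 < sv b6 q"
  by (rule cell_ok[where a="253/400" and b="131/200"]) (simp_all add: b6_def power_divide)

lemma b6_c2: "131/200 \<le> q \<Longrightarrow> q \<le> 269/400 \<Longrightarrow> 1/20 < sv b6 q"
  by (rule cell_ok[where a="131/200" and b="269/400"]) (simp_all add: b6_def power_divide)

lemma b6_c3: "269/400 \<le> q \<Longrightarrow> q \<le> 137/200 \<Longrightarrow> 1/20 < sv b6 q"
  by (rule cell_ok[where a="269/400" and b="137/200"]) (simp_all add: b6_def power_divide)

lemma b6_c4: "137/200 \<le> q \<Longrightarrow> q \<le> 139/200 \<Longrightarrow> 1/20 < sv b6 q"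
  by (rule cell_ok[where a="137/200" and b="139/200"]) (simp_all add: b6_def power_divide)

lemma b6_c5: "139/200 \<le> q \<Longrightarrow> q \<le> 141/200 \<Longrightarrow> 1/20 < sv b6 q"
  by (rule cell_ok[where a="139/200" and b="141/200"]) (simp_all add: b6_def power_divide)

lemma b6_c6: "141/200 \<le> q \<Longrightarrow> q \<le> 57/80 \<Longrightarrow> 1/20 < sv b6 q"
  by (rule cell_ok[where a="141/200" and b="57/80"]) (simp_all add: b6_def power_divide)

lemma b6_c7: "57/80 \<le> q \<Longrightarrow> q \<le> 18/25 \<Longrightarrow> 1/20 < sv b6 q"
  by (rule cell_ok[where a="57/80" and b="18/25"]) (simp_all add: b6_def power_divide)

lemma b6_c8: "18/25 \<le> q \<Longrightarrow> q \<le> 291/400 \<Longrightarrow> 1/20 < sv b6 q"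
  by (rule cell_ok[where a="18/25" and b="291/400"]) (simp_all add: b6_def power_divide)

lemma b6_c9: "291/400 \<le> q \<Longrightarrow> q \<le> 293/400 \<Longrightarrow> 1/20 < sv b6 q"
  by (rule cell_ok[where a="291/400" and b="293/400"]) (simp_all add: b6_def power_divide)

lemma b6_c10: "293/400 \<le> q \<Longrightarrow> q \<le> 59/80 \<Longrightarrow> 1/20 < sv b6 q"
  by (rule cell_ok[where a="293/400" and b="59/80"]) (simp_all add: b6_def power_divide)

lemma b6_c11: "59/80 \<le> q \<Longrightarrow> q \<le> 297/400 \<Longrightarrow> 1/20 < sv b6 q"
  by (rule cell_ok[where a="59/80" and b="297/400"]) (simp_all add: b6_def power_divide)

lemma b6_c12: "297/400 \<le> q \<Longrightarrow> q \<le> 299/400 \<Longrightarrow> 1/20 < sv b6 q"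
  by (rule cell_ok[where a="297/400" and b="299/400"]) (simp_all add: b6_def power_divide)

lemma b6_c13: "299/400 \<le> q \<Longrightarrow> q \<le> 3/4 \<Longrightarrow> 1/20 < sv b6 q"
  by (rule cell_ok[where a="299/400" and b="3/4"]) (simp_all add: b6_def power_divide)

lemma b6_pos:
  assumes "3/5 \<le> q" "q \<le> 3/4"
  shows "1/20 < sv b6 q"
proof (cases "q \<le> 253/400")
  case True then show ?thesis using b6_c0[of q] assms by linarith
next
  case False note f0 = False
  show ?thesis
    proof (cases "q \<le> 131/200")
      case True then show ?thesis using b6_c1[of q] assms f0 by linarith
    next
      case False note f1 = False
      show ?thesis
        proof (cases "q \<le> 269/400")
          case True then show ?thesis using b6_c2[of q] assms f1 by linarith
        next
          case False note f2 = False
          show ?thesis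
            proof (cases "q \<le> 137/200")
              case True then show ?thesis using b6_c3[of q] assms f2 by linarith
            next
              case False note f3 = False
              show ?thesis
                proof (cases "q \<le> 139/200")
                  case True then show ?thesis using b6_c4[of q] assms f3 by linarith
                next
                  case False note f4 = False
                  show ?thesis
                    proof (cases "q \<le> 141/200")
                      case True then show ?thesis using b6_c5[of q] assms f4 by linarith
                    next
                      case False note f5 = False
                      show ?thesis
                        proof (cases "q \<le> 57/80")
                          case True then show ?thesis using b6_c6[of q] assms f5 by linarith
                        next
                          case False note f6 = False
                          show ?thesis
                            proof (cases "q \<le> 18/25")
                              case True then show ?thesis using b6_c7[of q] assms f6 by linarith
                            next
                              case False note f7 = False
                              show ?thesis
                                proof (cases "q \<le> 291/400")
                                  case True then show ?thesis using b6_c8[of q] assms f7 by linarith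
                                next
                                  case False note f8 = False
                                  show ?thesis
                                    proof (cases "q \<le> 293/400")
                                      case True then show ?thesis using b6_c9[of q] assms f8 by linarith
                                    next
                                      case False note f9 = False
                                      show ?thesis
                                        proof (cases "q \<le> 59/80")
                                          case True then show ?thesis using b6_c10[of q] assms f9 by linarith
                                        next
                                          case False note f10 = False
                                          show ?thesis
                                            proof (cases "q \<le> 297/400")
                                              case True then show ?thesis using b6_c11[of q] assms f10 by linarith
                                            next
                                              case False note f11 = False
                                              show ?thesis
                                                proof (cases "q \<le> 299/400")
                                                  case True then show ?thesis using b6_c12[of q] assms f11 by linarith
                                                next
                                                  case False note f12 = False
                                                  show ?thesis
                                                    using b6_c13[of q] assms f12 by linarith
                                                qed
                                            qed
                                        qed
                                    qed
                                qed
                            qed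
                        qed
                    qed
                qed
            qed
        qed
    qed
qed

definition Fb :: "real \<Rightarrow> real \<Rightarrow> real" where
  "Fb q t = sv b0 q * (1-t)^6 + sv b1 q * (6*t*(1-t)^5) + sv b2 q * (15*t^2*(1-t)^4)
     + sv b3 q * (20*t^3*(1-t)^3) + sv b4 q * (15*t^4*(1-t)^2) + sv b5 q * (6*t^5*(1-t))
     + sv b6 q * t^6"

lemma Fb_eq:
  "(\<Sum>i\<in>{0,1,2,3,4,5,6,7::nat}. q ^ (i * (i + 1) div 2) * pe (snd (AB i)) t) = Fb q t"
  by (simp add: AB0 AB1 AB1s AB2 AB3 AB4 AB5 AB6 AB7 Fb_def b0_def b1_def b2_def b3_def b4_def b5_def b6_def
      of_rat_minus of_rat_divide del: AB.simps) algebra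

lemma Fb_pos:
  assumes "3/5 \<le> q" "q \<le> 3/4" "0 \<le> t" "t \<le> 1"
  shows "1/20 \<le> Fb q t"
proof -
  have u: "0 \<le> 1 - t" using assms by simp
  have h0: "1/20 * (1-t)^6 \<le> sv b0 q * (1-t)^6"
    by (rule mult_right_mono) (use b0_pos[OF assms(1,2)] u assms(3) in auto)
  have h1: "1/20 * (6*t*(1-t)^5) \<le> sv b1 q * (6*t*(1-t)^5)"
    by (rule mult_right_mono) (use b1_pos[OF assms(1,2)] u assms(3) in auto)
  have h2: "1/20 * (15*t^2*(1-t)^4) \<le> sv b2 q * (15*t^2*(1-t)^4)"
    by (rule mult_right_mono) (use b2_pos[OF assms(1,2)] u assms(3) in auto)
  have h3: "1/20 * (20*t^3*(1-t)^3) \<le> sv b3 q * (20*t^3*(1-t)^3)"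
    by (rule mult_right_mono) (use b3_pos[OF assms(1,2)] u assms(3) in auto)
  have h4: "1/20 * (15*t^4*(1-t)^2) \<le> sv b4 q * (15*t^4*(1-t)^2)"
    by (rule mult_right_mono) (use b4_pos[OF assms(1,2)] u assms(3) in auto)
  have h5: "1/20 * (6*t^5*(1-t)) \<le> sv b5 q * (6*t^5*(1-t))"
    by (rule mult_right_mono) (use b5_pos[OF assms(1,2)] u assms(3) in auto)
  have h6: "1/20 * t^6 \<le> sv b6 q * t^6"
    by (rule mult_right_mono) (use b6_pos[OF assms(1,2)] u assms(3) in auto)
  have "(1-t)^6 + (6*t*(1-t)^5) + (15*t^2*(1-t)^4) + (20*t^3*(1-t)^3)
     + (15*t^4*(1-t)^2) + (6*t^5*(1-t)) + t^6 = 1"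
    by algebra
  then have "1/20 = 1/20 * (1-t)^6 + 1/20 * (6*t*(1-t)^5) + 1/20 * (15*t^2*(1-t)^4) + 1/20 * (20*t^3*(1-t)^3)
     + 1/20 * (15*t^4*(1-t)^2) + 1/20 * (6*t^5*(1-t)) + 1/20 * t^6" by (simp add: algebra_simps)
  then show ?thesis unfolding Fb_def using h0 h1 h2 h3 h4 h5 h6 by linarith
qed

lemma T_bound: "36 + 9 * (n::nat) \<le> (n + 8) * (n + 8 + 1) div 2"
proof -
  have "n \<le> n * n" by (cases n) auto
  then have "2 * (36 + 9 * n) \<le> (n + 8) * (n + 8 + 1)" by (simp add: algebra_simps)
  from div_le_mono[OF this, of 2] show ?thesis by simp
qed

theorem lemma10:
  fixes q t :: real
  assumes "0.6 \<le> q" and "q \<le> 0.75" and "0 \<le> t" and "t \<le> 1"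
  shows "ptheta q (Complex (- t) (3 / sqrt 2)) \<noteq> 0"
proof -
  have q1: "3/5 \<le> q" "q \<le> 3/4" using assms(1,2) by simp_all
  have qnn: "0 \<le> q" and qle1: "q \<le> 1" using q1 by linarith+
  define w where "w = 3 / sqrt 2"
  define x where "x = Complex (-t) w"
  have w2: "w * w = 9/2" unfolding w_def by (simp add: field_simps)
  have s2: "sqrt 2 \<le> 3/2" by (rule real_le_lsqrt) (auto simp: power2_eq_square)
  have wge: "2 \<le> w" unfolding w_def using s2 by (simp add: le_divide_eq)
  define f where "f j = complex_of_real (q ^ (j * (j + 1) div 2)) * x ^ j" for j
  have th: "ptheta q (Complex (- t) (3 / sqrt 2)) = suminf f"
    unfolding ptheta_def f_def x_def w_def ..
  have nx: "(cmod x)^2 = t^2 + 9/2"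
    unfolding x_def cmod_power2 by (simp add: power2_eq_square w2)
  have "t^2 \<le> 1" using assms(3,4) by (simp add: power_le_one)
  then have nx2: "(cmod x)^2 \<le> 11/2" using nx by simp
  have c0: "0 \<le> cmod x" by simp
  have r1: "q^9 * cmod x \<le> 1/5"
  proof (rule power2_le_imp_le)
    have a: "q^18 \<le> (3/4)^18" by (rule power_mono) (use q1 qnn in auto)
    have "(q^9 * cmod x)^2 = q^18 * (cmod x)^2" by (simp add: power_mult_distrib flip: power_mult)
    also have "\<dots> \<le> (3/4)^18 * (11/2)" by (rule mult_mono) (use a nx2 in auto)
    also have "\<dots> \<le> (1/5)^2" by (simp add: power_divide)
    finally show "(q^9 * cmod x)^2 \<le> (1/5)^2" .
  qed simp
  have r2: "q^36 * (cmod x)^8 \<le> 3/100"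
  proof -
    have a: "q^36 \<le> (3/4)^36" by (rule power_mono) (use q1 qnn in auto)
    have b: "(cmod x)^8 \<le> (11/2)^4"
    proof -
      have "(cmod x)^8 = ((cmod x)^2)^4" by (simp flip: power_mult)
      also have "\<dots> \<le> (11/2)^4" by (rule power_mono) (use nx2 in auto)
      finally show ?thesis .
    qed
    have "q^36 * (cmod x)^8 \<le> (3/4)^36 * (11/2)^4" by (rule mult_mono) (use a b in auto)
    also have "\<dots> \<le> 3/100" by (simp add: power_divide)
    finally show ?thesis .
  qed
  have tb: "norm (f (n+8)) \<le> 3/100 * (1/5)^n" for n
  proof -
    have "norm (f (n+8)) = q^((n+8)*(n+8+1) div 2) * cmod x^(n+8)"
      by (simp add: f_def norm_mult norm_power qnn)
    also have "\<dots> \<le> q^(36 + 9*n) * cmod x^(n+8)"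
      by (intro mult_right_mono power_decreasing T_bound qnn qle1) simp
    also have "\<dots> = (q^36 * cmod x^8) * (q^9 * cmod x)^n"
      by (simp add: power_add power_mult_distrib mult_ac flip: power_mult)
    also have "\<dots> \<le> 3/100 * (1/5)^n"
      by (intro mult_mono r2 power_mono r1) (auto simp: qnn)
    finally show ?thesis .
  qed
  have sg: "summable (\<lambda>n. 3/100 * (1/5::real)^n)"
    by (intro summable_mult summable_geometric) simp
  have sf8: "summable (\<lambda>n. f (n+8))"
    by (rule summable_comparison_test'[OF sg]) (rule tb)
  have sf: "summable f" using sf8 by simp
  have split: "suminf f = (\<Sum>n. f (n+8)) + (\<Sum>i<8. f i)"
    by (rule suminf_split_initial_segment[OF sf])
  have tailn: "norm (\<Sum>n. f (n+8)) \<le> 3/80"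
  proof -
    have "norm (\<Sum>n. f (n+8)) \<le> (\<Sum>n. 3/100 * (1/5::real)^n)"
      by (rule norm_suminf_le[OF tb sg])
    also have "\<dots> = 3/100 * (\<Sum>n. (1/5::real)^n)"
      by (rule suminf_mult) simp
    also have "\<dots> = 3/80" by (subst suminf_geometric) simp_all
    finally show ?thesis .
  qed
  have imS: "Im (\<Sum>i<8. f i) = w * Fb q t"
  proof -
    have "Im (\<Sum>i<8. f i) = (\<Sum>i<8. w * (q ^ (i*(i+1) div 2) * pe (snd (AB i)) t))"
      by (simp add: f_def x_def AB_pow[OF w2] algebra_simps)
    also have "\<dots> = w * (\<Sum>i<8. q ^ (i*(i+1) div 2) * pe (snd (AB i)) t)"
      by (simp add: sum_distrib_left)
    also have "(\<Sum>i<8. q ^ (i*(i+1) div 2) * pe (snd (AB i)) t) = Fb q t"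
    proof -
      have e: "{..<8::nat} = {0,1,2,3,4,5,6,7}" by auto
      show ?thesis unfolding e by (rule Fb_eq)
    qed
    finally show ?thesis .
  qed
  have Fb: "1/20 \<le> Fb q t" by (rule Fb_pos) (use q1 assms in auto)
  have "2 * (1/20) \<le> w * Fb q t" by (rule mult_mono) (use wge Fb in auto)
  moreover have "\<bar>Im (\<Sum>n. f (n+8))\<bar> \<le> 3/80"
    using abs_Im_le_cmod[of "\<Sum>n. f (n+8)"] tailn by linarith
  ultimately have "0 < Im (suminf f)" using split imS by simp
  then show ?thesis using th by auto
qed

end
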